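(* For every $c_*\in(0,1/8]$ there exist constants $C,c,c'>0$ (depending only on $c_*$, $s$ and the $\lambda_i$) such that the following holds. Let $\varepsilon,\delta\in(0,1]$, $\nu>0$, $R\geq1$, frequencies $\mathbf{z}_1,\dots,\mathbf{z}_R\in\mathbb{Z}_M\times\mathbb{Z}_{M^2}$ with phases $\phi_1,\dots,\phi_R$, assume $N\geq(2/(\varepsilon\delta))^{CR^3}$, and let $(q,U,V,(r_n),P,(Q_n))$ be a linearization system with parameter $c_*$ for $(\varepsilon,\delta,\phi_1,\dots,\phi_R)$, with associated smoothing $h\mapsto\widetilde h$. Let $A\subseteq[N]$ have density $\delta=|A|/N$ and suppose $$\Big\|\frac{\widetilde{f_A}}{\delta}\Big\|_{L^2(N)}^2\geq\nu.$$ If $\varepsilon\leq c\,\nu\delta$, then there exists an arithmetic progression $Q\subseteq[N]$ such that $$\frac{|A\cap Q|}{|Q|}\geq(1+\nu/2)\,\delta,\qquad |Q|\geq N^{c'/R^3}.$$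
   Context: $[N]=\{1,\dots,N\}$, $\|x\|$ is the distance from $x$ to the nearest integer. $M$ is a prime with $Y\leq M\leq 2Y$, $Y=2(|\lambda_1|+\dots+|\lambda_s|)N$, for fixed nonzero integers $\lambda_1,\dots,\lambda_s$. For $\mathbf{z}_i=(x_i,y_i)$, $\phi_i(n)=\frac{x_i}{M}n+\frac{y_i}{M^2}n^2$. $f_A=1_A-\delta1_{[N]}$ and $\|g\|_{L^2(N)}=\big(\frac1N\sum_{n=1}^N|g(n)|^2\big)^{1/2}$. An arithmetic progression is a set $\{u+dj:j\in[L]\}$ with integers $u$, $d\geq1$, $L\geq1$. A linearization system with parameter $c_*$ for $(\varepsilon,\delta,\phi_1,\dots,\phi_R)$ consists of integers $q\geq1$, $U,V\geq1$, $r_n\geq1$ ($n\in\mathbb{Z}$) with $N^{c_*/R^2}\leq U\leq 2N^{c_*/R^2}$, $U^{c_*/R}\leq V\leq 2U^{c_*/R}$, $q\leq N^{1/4}$, $r_n\leq U^{1/4}$, together with $P=\{q,2q,\dots,Uq\}$ and $Q_n=\{qr_n,2qr_n,\dots,Vqr_n\}$, such that $\|\phi_i(n+m+k)-\phi_i(n+m)\|\leq\varepsilon\delta$ for all $n\in[N]$, $m\in P$, $k\in Q_n$, $i\in[R]$. The associated smoothing of $h:\mathbb{Z}\to\mathbb{C}$ supported in $[N]$ is $\widetilde h:[N]\to\mathbb{C}$, $\widetilde h(n)=\frac{1}{|P|}\sum_{m\in P}\frac{1}{|Q_{n-m}|}\sum_{k\in Q_{n-m}}h(n+k)$. *)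

theory Defs
  imports "HOL-Computational_Algebra.Primes" Complex_Main
begin

definition dist_int :: "real \<Rightarrow> real" where
  "dist_int x = \<bar>x - real_of_int (round x)\<bar>"

text \<open>Phase attached to the frequency (x, y) in Z_M x Z_{M^2}.\<close>
definition phase :: "nat \<Rightarrow> int \<Rightarrow> int \<Rightarrow> int \<Rightarrow> real" where
  "phase M x y n = real_of_int x / real M * real_of_int n
                  + real_of_int y / (real M)^2 * (real_of_int n)^2"

definition linP :: "nat \<Rightarrow> nat \<Rightarrow> int set" where
  "linP q U = (\<lambda>j. int q * j) ` {1..int U}"

definition linQ :: "nat \<Rightarrow> nat \<Rightarrow> (int \<Rightarrow> nat) \<Rightarrow> int \<Rightarrow> int set" where
  "linQ q V r n = (\<lambda>j. int q * int (r n) * j) ` {1..int V}"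

text \<open>Linearization system with parameter cs for (eps, delta, phi_1..phi_R),
  where phi_i = phase M (x i) (y i).\<close>
definition lin_system ::
  "real \<Rightarrow> nat \<Rightarrow> real \<Rightarrow> real \<Rightarrow> nat \<Rightarrow> nat \<Rightarrow> (nat \<Rightarrow> int) \<Rightarrow> (nat \<Rightarrow> int)
   \<Rightarrow> nat \<Rightarrow> nat \<Rightarrow> nat \<Rightarrow> (int \<Rightarrow> nat) \<Rightarrow> bool" where
  "lin_system cs N \<epsilon> \<delta> M R x y q U V r \<longleftrightarrow>
     q \<ge> 1 \<and> U \<ge> 1 \<and> V \<ge> 1 \<and> (\<forall>n. r n \<ge> 1) \<and>
     real N powr (cs / real R ^ 2) \<le> real U \<and> real U \<le> 2 * real N powr (cs / real R ^ 2) \<and>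
     real U powr (cs / real R) \<le> real V \<and> real V \<le> 2 * real U powr (cs / real R) \<and>
     real q \<le> real N powr (1/4) \<and> (\<forall>n. real (r n) \<le> real U powr (1/4)) \<and>
     (\<forall>n\<in>{1..int N}. \<forall>m\<in>linP q U. \<forall>k\<in>linQ q V r n. \<forall>i\<in>{1..R}.
        dist_int (phase M (x i) (y i) (n + m + k) - phase M (x i) (y i) (n + m)) \<le> \<epsilon> * \<delta>)"

definition smoothing :: "nat \<Rightarrow> nat \<Rightarrow> nat \<Rightarrow> (int \<Rightarrow> nat) \<Rightarrow> (int \<Rightarrow> real) \<Rightarrow> int \<Rightarrow> real" where
  "smoothing q U V r h n =
     (1 / real (card (linP q U))) * (\<Sum>m\<in>linP q U.
        (1 / real (card (linQ q V r (n - m)))) * (\<Sum>k\<in>linQ q V r (n - m). h (n + k)))"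

definition balanced_fn :: "int set \<Rightarrow> real \<Rightarrow> nat \<Rightarrow> int \<Rightarrow> real" where
  "balanced_fn A \<delta> N n = (if n \<in> A then 1 else 0) - \<delta> * (if n \<in> {1..int N} then 1 else 0)"

definition L2N_sq :: "nat \<Rightarrow> (int \<Rightarrow> real) \<Rightarrow> real" where
  "L2N_sq N g = (1 / real N) * (\<Sum>n\<in>{1..int N}. (g n)^2)"

definition is_AP :: "int set \<Rightarrow> bool" where
  "is_AP Q \<longleftrightarrow> (\<exists>u d L. d \<ge> 1 \<and> L \<ge> 1 \<and> Q = {u + d * j | j. j \<in> {1..L}})"

end

theory Submission
  imports Defs
begin

lemma sum_linP:
  assumes "q \<ge> 1"
  shows "sum g (linP q U) = (\<Sum>i=1..U. g (int q * int i))"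
proof -
  have s: "{1..int U} = int ` {1..U}" by (simp add: image_int_atLeastAtMost)
  have "linP q U = (\<lambda>i. int q * int i) ` {1..U}"
    unfolding linP_def s image_comp by (simp add: comp_def)
  moreover have "inj_on (\<lambda>i. int q * int i) {1..U}" using assms by (auto simp: inj_on_def)
  ultimately show ?thesis by (simp add: sum.reindex)
qed

lemma card_linP: assumes "q \<ge> 1" shows "card (linP q U) = U"
proof -
  have "card (linP q U) = sum (\<lambda>_. 1) (linP q U)" by (rule card_eq_sum)
  also have "\<dots> = U" unfolding sum_linP[OF assms] by simp
  finally show ?thesis .
qed

lemma sum_linQ:
  assumes "q \<ge> 1" "r n \<ge> 1"
  shows "sum g (linQ q V r n) = (\<Sum>j=1..V. g (int q * int (r n) * int j))"
proof -
  have s: "{1..int V} = int ` {1..V}" by (simp add: image_int_atLeastAtMost)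
  have "linQ q V r n = (\<lambda>j. int q * int (r n) * int j) ` {1..V}"
    unfolding linQ_def s image_comp by (simp add: comp_def)
  moreover have "inj_on (\<lambda>j. int q * int (r n) * int j) {1..V}" using assms by (auto simp: inj_on_def)
  ultimately show ?thesis by (simp add: sum.reindex)
qed

lemma card_linQ: assumes "q \<ge> 1" "r n \<ge> 1" shows "card (linQ q V r n) = V"
proof -
  have "card (linQ q V r n) = sum (\<lambda>_. 1) (linQ q V r n)" by (rule card_eq_sum)
  also have "\<dots> = V" unfolding sum_linQ[where q=q and r=r and n=n, OF assms] by simp
  finally show ?thesis .
qed

lemma smoothing_eq:
  assumes "q \<ge> 1" "\<forall>n. r n \<ge> 1" "U \<ge> 1" "V \<ge> 1"
  shows "smoothing q U V r h n = (1 / (real U * real V)) *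
     (\<Sum>i=1..U. \<Sum>j=1..V. h (n + int q * int (r (n - int q * int i)) * int j))"
  unfolding smoothing_def using assms
  by (simp add: card_linP card_linQ sum_linP sum_linQ sum_distrib_left)

lemma shift_tele:
  fixes F :: "int \<Rightarrow> real"
  assumes "\<forall>x. \<bar>F x\<bar> \<le> 1"
  shows "\<bar>(\<Sum>i=1..U. F (int i + int t)) - (\<Sum>i=1..U. F (int i))\<bar> \<le> 2 * real t"
proof (induction t)
  case 0 then show ?case by simp
next
  case (Suc t)
  have "(\<Sum>i=1..U. F (int (Suc i) + int t) - F (int i + int t)) = F (int (Suc U) + int t) - F (int 1 + int t)"
    using sum_Suc_diff[of 1 U "\<lambda>i. F (int i + int t)"] by simp
  then have e: "(\<Sum>i=1..U. F (int i + int (Suc t))) - (\<Sum>i=1..U. F (int i + int t)) = F (int (Suc U) + int t) - F (int 1 + int t)"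
    by (simp add: sum_subtractf add_ac)
  have "\<bar>F (int (Suc U) + int t) - F (int 1 + int t)\<bar> \<le> 2"
    using assms[rule_format, of "int (Suc U) + int t"] assms[rule_format, of "int 1 + int t"] by linarith
  moreover have "\<bar>(\<Sum>i=1..U. F (int i + int (Suc t))) - (\<Sum>i=1..U. F (int i))\<bar> \<le>
     \<bar>(\<Sum>i=1..U. F (int i + int (Suc t))) - (\<Sum>i=1..U. F (int i + int t))\<bar> + \<bar>(\<Sum>i=1..U. F (int i + int t)) - (\<Sum>i=1..U. F (int i))\<bar>"
    by (rule order_trans[OF _ abs_triangle_ineq]) simp
  ultimately have "\<bar>(\<Sum>i=1..U. F (int i + int (Suc t))) - (\<Sum>i=1..U. F (int i))\<bar> \<le> 2 + 2 * real t"
    using Suc unfolding e by linarith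
  moreover have "2 + 2 * real t = 2 * real (Suc t)" by simp
  ultimately show ?case by linarith
qed



lemma abs_sum_le:
  fixes g :: "'a \<Rightarrow> real"
  assumes "finite A" "\<forall>x\<in>A. \<bar>g x\<bar> \<le> b"
  shows "\<bar>sum g A\<bar> \<le> real (card A) * b"
proof -
  have "\<bar>sum g A\<bar> \<le> sum (\<lambda>x. \<bar>g x\<bar>) A" by (rule sum_abs)
  also have "\<dots> \<le> real (card A) * b" using sum_bounded_above[of A "\<lambda>x. \<bar>g x\<bar>" b] assms by simp
  finally show ?thesis .
qed

lemma smoothing_abs:
  assumes "q \<ge> 1" "\<forall>n. r n \<ge> 1" "U \<ge> 1" "V \<ge> 1" "\<forall>x. \<bar>h x\<bar> \<le> 1"
  shows "\<bar>smoothing q U V r h n\<bar> \<le> 1"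
proof -
  let ?S = "\<Sum>i=1..U. \<Sum>j=1..V. h (n + int q * int (r (n - int q * int i)) * int j)"
  have "\<forall>i\<in>{1..U}. \<bar>\<Sum>j=1..V. h (n + int q * int (r (n - int q * int i)) * int j)\<bar> \<le> real V * 1"
  proof
    fix i show "\<bar>\<Sum>j=1..V. h (n + int q * int (r (n - int q * int i)) * int j)\<bar> \<le> real V * 1"
      using abs_sum_le[of "{1..V}" "\<lambda>j. h (n + int q * int (r (n - int q * int i)) * int j)" 1] assms(5) by simp
  qed
  then have "\<bar>?S\<bar> \<le> real U * (real V * 1)" using abs_sum_le[of "{1..U}" _ "real V * 1"] by simp
  then have "\<bar>?S\<bar> / (real U * real V) \<le> 1" using assms(3,4) by simp
  then show ?thesis unfolding smoothing_eq[OF assms(1-4)] by (simp add: abs_mult)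
qed



lemma shift_inner:
  fixes f :: "int \<Rightarrow> real"
  assumes f0: "\<forall>x. x \<notin> {1..int N} \<longrightarrow> f x = 0"
    and bd: "\<forall>n'. int q * int (r n') * int j \<le> int T"
    and i: "int q * int i \<le> int q * int U"
  shows "(\<Sum>n\<in>{1 - int T..int N}. f (n + int q * int (r (n - int q * int i)) * int j))
       = (\<Sum>n'\<in>{1 - int T - int q * int U..int N}. f (n' + int q * int i + int q * int (r n') * int j))"
proof -
  let ?s = "int q * int i"
  let ?g = "\<lambda>n'. f (n' + ?s + int q * int (r n') * int j)"
  have "(\<Sum>n\<in>{1 - int T..int N}. f (n + int q * int (r (n - ?s)) * int j))
      = (\<Sum>n'\<in>{1 - int T - ?s..int N - ?s}. ?g n')"
    by (rule sum.reindex_bij_witness[where j="\<lambda>n. n - ?s" and i="\<lambda>n'. n' + ?s"]) (auto simp: add_ac)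
  also have "\<dots> = (\<Sum>n'\<in>{1 - int T - int q * int U..int N}. ?g n')"
  proof (rule sum.mono_neutral_left)
    show "finite {1 - int T - int q * int U..int N}" by simp
    show "{1 - int T - ?s..int N - ?s} \<subseteq> {1 - int T - int q * int U..int N}"
      using i by auto
    show "\<forall>n'\<in>{1 - int T - int q * int U..int N} - {1 - int T - ?s..int N - ?s}. ?g n' = 0"
    proof
      fix n' assume "n' \<in> {1 - int T - int q * int U..int N} - {1 - int T - ?s..int N - ?s}"
      then have "n' < 1 - int T - ?s \<or> n' > int N - ?s" by auto
      moreover have "int q * int (r n') * int j \<le> int T" using bd by auto
      moreover have "0 \<le> int q * int (r n') * int j" by simp
      ultimately have "\<not> (1 \<le> n' + ?s + int q * int (r n') * int j \<and> n' + ?s + int q * int (r n') * int j \<le> int N)" by linarith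
      then have "n' + ?s + int q * int (r n') * int j \<notin> {1..int N}" by simp
      then show "?g n' = 0" using f0 by blast
    qed
  qed
  finally show ?thesis .
qed

lemma shift_full:
  fixes f :: "int \<Rightarrow> real"
  assumes f0: "\<forall>x. x \<notin> {1..int N} \<longrightarrow> f x = 0" and fs: "sum f {1..int N} = 0"
    and i: "int q * int i \<le> int q * int U" "0 \<le> int q * int i"
  shows "(\<Sum>n'\<in>{1 - int T - int q * int U..int N}. f (n' + int q * int i)) = 0"
proof -
  let ?s = "int q * int i"
  have "(\<Sum>n'\<in>{1 - int T - int q * int U..int N}. f (n' + ?s))
      = (\<Sum>x\<in>{(1 - int T - int q * int U) + ?s..int N + ?s}. f x)"
    by (rule sum.reindex_bij_witness[where i="\<lambda>x. x - ?s" and j="\<lambda>n'. n' + ?s"]) auto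
  also have "\<dots> = sum f {1..int N}"
  proof (rule sum.mono_neutral_right)
    show "finite {(1 - int T - int q * int U) + ?s..int N + ?s}" by simp
    show "{1..int N} \<subseteq> {(1 - int T - int q * int U) + ?s..int N + ?s}" using i by auto
    show "\<forall>x\<in>{(1 - int T - int q * int U) + ?s..int N + ?s} - {1..int N}. f x = 0" using f0 by auto
  qed
  finally show ?thesis using fs by simp
qed



lemma swap3: "(\<Sum>a\<in>A. \<Sum>b\<in>B. \<Sum>c\<in>C. g a b c) = (\<Sum>b\<in>B. \<Sum>c\<in>C. \<Sum>a\<in>A. g a b c)"
proof -
  have "(\<Sum>a\<in>A. \<Sum>b\<in>B. \<Sum>c\<in>C. g a b c) = (\<Sum>b\<in>B. \<Sum>a\<in>A. \<Sum>c\<in>C. g a b c)" by (rule sum.swap)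
  also have "\<dots> = (\<Sum>b\<in>B. \<Sum>c\<in>C. \<Sum>a\<in>A. g a b c)" by (rule sum.cong[OF refl], rule sum.swap)
  finally show ?thesis .
qed

lemma mean_bound:
  fixes f :: "int \<Rightarrow> real" and Rr :: real
  assumes f1: "\<forall>x. \<bar>f x\<bar> \<le> 1" and f0: "\<forall>x. x \<notin> {1..int N} \<longrightarrow> f x = 0"
    and fs: "sum f {1..int N} = 0"
    and q: "q \<ge> 1" and U: "U \<ge> 1" and V: "V \<ge> 1" and r: "\<forall>n. r n \<ge> 1"
    and rR: "\<forall>n. real (r n) \<le> Rr" and T: "\<forall>n. q * r n * V \<le> T"
  shows "\<bar>\<Sum>n\<in>{1..int N}. smoothing q U V r f n\<bar> \<le> real T + real (N + T + q*U) * (2 * Rr * real V / real U)"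
proof -
  define sm where "sm = smoothing q U V r f"
  define W where "W = {1 - int T..int N}"
  define W' where "W' = {1 - int T - int q * int U..int N}"
  define X where "X = (\<lambda>n i j. f (n + int q * int (r (n - int q * int i)) * int j))"
  define G where "G = (\<lambda>n' i j. f (n' + int q * int i + int q * int (r n') * int j))"
  have Rr1: "Rr \<ge> 1" using rR r by (metis dual_order.trans of_nat_1 of_nat_le_iff)
  have sm_abs: "\<forall>n. \<bar>sm n\<bar> \<le> 1" using smoothing_abs[OF q r U V f1] by (simp add: sm_def)
  have split: "sum sm W = sum sm {1 - int T..0} + sum sm {1..int N}"
  proof -
    have "W = {1 - int T..0} \<union> {1..int N}" unfolding W_def by auto
    then show ?thesis by (simp add: sum.union_disjoint)
  qed
  have b1: "\<bar>sum sm {1 - int T..0}\<bar> \<le> real T"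
    using abs_sum_le[of "{1 - int T..0}" sm 1] sm_abs by simp
  define D where "D = (\<Sum>n'\<in>W'. \<Sum>j=1..V. \<Sum>i=1..U. G n' i j)"
  have "sum sm W = (\<Sum>n\<in>W. (1 / (real U * real V)) * (\<Sum>i=1..U. \<Sum>j=1..V. X n i j))"
    unfolding sm_def X_def smoothing_eq[OF q r U V] ..
  also have "\<dots> = (1 / (real U * real V)) * (\<Sum>n\<in>W. \<Sum>i=1..U. \<Sum>j=1..V. X n i j)"
    by (simp add: sum_distrib_left)
  also have "(\<Sum>n\<in>W. \<Sum>i=1..U. \<Sum>j=1..V. X n i j) = (\<Sum>i=1..U. \<Sum>j=1..V. \<Sum>n\<in>W. X n i j)"
    by (rule swap3)
  also have "\<dots> = (\<Sum>i=1..U. \<Sum>j=1..V. \<Sum>n'\<in>W'. G n' i j)"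
  proof (intro sum.cong[OF refl])
    fix i j assume i: "i \<in> {1..U}" and j: "j \<in> {1..V}"
    have bd: "\<forall>n'. int q * int (r n') * int j \<le> int T"
    proof
      fix n'
      have "q * r n' * j \<le> q * r n' * V" using j by simp
      also have "\<dots> \<le> T" using T by blast
      finally show "int q * int (r n') * int j \<le> int T" by (simp flip: of_nat_mult)
    qed
    have ii: "int q * int i \<le> int q * int U" using i by (simp add: mult_left_mono)
    show "(\<Sum>n\<in>W. X n i j) = (\<Sum>n'\<in>W'. G n' i j)"
      unfolding W_def W'_def X_def G_def by (rule shift_inner[OF f0 bd ii])
  qed
  also have "\<dots> = D"
  proof -
    have "(\<Sum>i=1..U. \<Sum>j=1..V. \<Sum>n'\<in>W'. G n' i j) = (\<Sum>j=1..V. \<Sum>i=1..U. \<Sum>n'\<in>W'. G n' i j)"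
      by (rule sum.swap)
    also have "\<dots> = D" unfolding D_def by (rule swap3[symmetric])
    finally show ?thesis .
  qed
  finally have sumW: "sum sm W = (1 / (real U * real V)) * D" .
  define H where "H = (\<lambda>n' (i::nat). f (n' + int q * int i))"
  have D_split: "D = (\<Sum>n'\<in>W'. \<Sum>j=1..V. ((\<Sum>i=1..U. G n' i j) - (\<Sum>i=1..U. H n' i)))
                    + (\<Sum>n'\<in>W'. \<Sum>j=1..V. \<Sum>i=1..U. H n' i)"
    unfolding D_def by (simp add: sum_subtractf)
  have zero: "(\<Sum>n'\<in>W'. \<Sum>j=1..V. \<Sum>i=1..U. H n' i) = 0"
  proof -
    have "(\<Sum>n'\<in>W'. \<Sum>j=1..V. \<Sum>i=1..U. H n' i) = (\<Sum>j=1..V. \<Sum>i=1..U. \<Sum>n'\<in>W'. H n' i)"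
      by (rule swap3)
    also have "\<dots> = 0"
    proof (rule sum.neutral, rule ballI, rule sum.neutral, rule ballI)
      fix j i assume j: "j \<in> {1..V}" and i: "i \<in> {1..U}"
      have ii: "int q * int i \<le> int q * int U" using i by (simp add: mult_left_mono)
      show "(\<Sum>n'\<in>W'. H n' i) = 0"
        unfolding W'_def H_def by (rule shift_full[OF f0 fs ii]) simp
    qed
    finally show ?thesis .
  qed
  have inner: "\<bar>(\<Sum>i=1..U. G n' i j) - (\<Sum>i=1..U. H n' i)\<bar> \<le> 2 * Rr * real V"
    if j: "j \<in> {1..V}" for n' j
  proof -
    let ?F = "\<lambda>x. f (n' + int q * x)"
    have e: "(\<Sum>i=1..U. G n' i j) = (\<Sum>i=1..U. ?F (int i + int (r n' * j)))"
      unfolding G_def by (rule sum.cong[OF refl]) (simp add: algebra_simps)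
    have "\<bar>(\<Sum>i=1..U. ?F (int i + int (r n' * j))) - (\<Sum>i=1..U. ?F (int i))\<bar> \<le> 2 * real (r n' * j)"
      by (rule shift_tele) (simp add: f1)
    moreover have "real (r n' * j) \<le> Rr * real V"
    proof -
      have "real (r n') * real j \<le> Rr * real V"
        using rR j by (intro mult_mono) auto
      then show ?thesis by simp
    qed
    ultimately show ?thesis unfolding e H_def by simp
  qed
  have "\<bar>D\<bar> \<le> real (card W') * (real V * (2 * Rr * real V))"
  proof -
    have "\<bar>(\<Sum>n'\<in>W'. \<Sum>j=1..V. ((\<Sum>i=1..U. G n' i j) - (\<Sum>i=1..U. H n' i)))\<bar> \<le> real (card W') * (real V * (2 * Rr * real V))"
    proof (rule abs_sum_le)
      show "finite W'" unfolding W'_def by simp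
      show "\<forall>n'\<in>W'. \<bar>\<Sum>j=1..V. ((\<Sum>i=1..U. G n' i j) - (\<Sum>i=1..U. H n' i))\<bar> \<le> real V * (2 * Rr * real V)"
      proof
        fix n' show "\<bar>\<Sum>j=1..V. ((\<Sum>i=1..U. G n' i j) - (\<Sum>i=1..U. H n' i))\<bar> \<le> real V * (2 * Rr * real V)"
          using abs_sum_le[of "{1..V}" "\<lambda>j. (\<Sum>i=1..U. G n' i j) - (\<Sum>i=1..U. H n' i)" "2 * Rr * real V"] inner
          by simp
      qed
    qed
    then show ?thesis using D_split zero by simp
  qed
  moreover have "card W' = N + T + q * U"
  proof -
    have "int N + (int T + int q * int U) = int (N + T + q * U)" by simp
    then show ?thesis unfolding W'_def by (simp only: card_atLeastAtMost_int)
  qed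
  ultimately have "\<bar>D\<bar> \<le> real (N + T + q * U) * (real V * (2 * Rr * real V))" by simp
  then have "\<bar>sum sm W\<bar> \<le> real (N + T + q * U) * (2 * Rr * real V / real U)"
    unfolding sumW using U V by (simp add: abs_mult field_simps)
  then show ?thesis using split b1 unfolding sm_def[symmetric] by linarith
qed



lemma avg_le:
  fixes g :: "'a \<Rightarrow> real"
  assumes "finite S" "card S > 0" "\<forall>x\<in>S. g x \<le> b"
  shows "(1 / real (card S)) * sum g S \<le> b"
proof -
  have "sum g S \<le> real (card S) * b" using sum_bounded_above[of S g b] assms by simp
  then show ?thesis using assms(2) by (simp add: field_simps)
qed

lemma avg_ge:
  fixes g :: "'a \<Rightarrow> real"
  assumes "finite S" "card S > 0" "\<forall>x\<in>S. b \<le> g x"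
  shows "b \<le> (1 / real (card S)) * sum g S"
proof -
  have "real (card S) * b \<le> sum g S" using sum_bounded_below[of S b g] assms by simp
  then show ?thesis using assms(2) by (simp add: field_simps)
qed

lemma ap_bound:
  assumes q: "q \<ge> 1" and V: "V \<ge> 1" and U: "U \<ge> 1" and r: "\<forall>n. r n \<ge> 1"
    and T: "\<forall>n. q * r n * V \<le> T"
    and A: "A \<subseteq> {1..int N}" and n: "1 \<le> n" "n + int T \<le> int N"
    and noAP: "\<forall>Q. is_AP Q \<longrightarrow> Q \<subseteq> {1..int N} \<longrightarrow> card Q = V \<longrightarrow>
                  real (card (A \<inter> Q)) / real (card Q) < (1 + \<nu>/2) * \<delta>"
  shows "smoothing q U V r (balanced_fn A \<delta> N) n \<le> \<nu> * \<delta> / 2"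
proof -
  let ?f = "balanced_fn A \<delta> N"
  have inner: "(1 / real (card (linQ q V r (n - m)))) * (\<Sum>k\<in>linQ q V r (n - m). ?f (n + k)) \<le> \<nu> * \<delta> / 2"
    for m
  proof -
    define d where "d = int q * int (r (n - m))"
    define Q where "Q = (\<lambda>k. n + k) ` linQ q V r (n - m)"
    have L: "linQ q V r (n - m) = (\<lambda>j. d * j) ` {1..int V}" unfolding linQ_def d_def ..
    have cL: "card (linQ q V r (n - m)) = V" using card_linQ[of q r "n - m" V] q r by simp
    have finL: "finite (linQ q V r (n - m))" unfolding L by simp
    have injn: "inj_on (\<lambda>k. n + k) (linQ q V r (n - m))" by (auto simp: inj_on_def)
    have cQ: "card Q = V" unfolding Q_def using card_image[OF injn] cL by simp
    have dV: "d * int V \<le> int T"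
    proof -
      have "q * r (n - m) * V \<le> T" using T by blast
      then show ?thesis unfolding d_def by (simp flip: of_nat_mult)
    qed
    have q1: "int q \<ge> 1" and r1: "int (r (n - m)) \<ge> 1" using q r by auto
    have d1: "d \<ge> 1" unfolding d_def using mult_mono[OF q1 r1] by simp
    have QN: "Q \<subseteq> {1..int N}"
    proof
      fix x assume "x \<in> Q"
      then obtain j where j: "j \<in> {1..int V}" and x: "x = n + d * j" unfolding Q_def L by auto
      have "d * j \<le> d * int V" using j d1 by (intro mult_left_mono) auto
      moreover have "0 \<le> d * j" using j d1 by simp
      ultimately show "x \<in> {1..int N}" using x n dV by auto
    qed
    have AP: "is_AP Q" unfolding is_AP_def
    proof (intro exI conjI)
      show "d \<ge> 1" by (rule d1)
      show "int V \<ge> 1" using V by simp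
      show "Q = {n + d * j |j. j \<in> {1..int V}}" unfolding Q_def L by (auto simp: image_iff) (metis atLeastAtMost_iff)
    qed
    have dens: "real (card (A \<inter> Q)) / real V < (1 + \<nu>/2) * \<delta>"
      using noAP AP QN cQ by auto
    have "(\<Sum>k\<in>linQ q V r (n - m). ?f (n + k)) = (\<Sum>x\<in>Q. ?f x)"
      unfolding Q_def by (simp add: sum.reindex[OF injn])
    also have "\<dots> = (\<Sum>x\<in>Q. (if x \<in> A then 1 else 0) - \<delta>)"
      using QN by (intro sum.cong) (auto simp: balanced_fn_def)
    also have "\<dots> = real (card (Q \<inter> A)) - \<delta> * real V"
    proof -
      have fQ: "finite Q" unfolding Q_def using finL by simp
      have "(\<Sum>x\<in>Q. (if x \<in> A then 1 else 0::real)) = sum (\<lambda>_. 1) (Q \<inter> A)"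
        using sum.inter_restrict[OF fQ, of "\<lambda>_. 1::real" A] by simp
      then show ?thesis using cQ by (simp add: sum_subtractf)
    qed
    finally have e: "(\<Sum>k\<in>linQ q V r (n - m). ?f (n + k)) = real (card (A \<inter> Q)) - \<delta> * real V"
      by (simp add: Int_commute)
    have "(real (card (A \<inter> Q)) - \<delta> * real V) / real V < \<nu> * \<delta> / 2"
      using dens V by (simp add: field_simps)
    then show ?thesis unfolding e cL by simp
  qed
  show ?thesis unfolding smoothing_def
  proof (rule avg_le)
    show "finite (linP q U)" unfolding linP_def by simp
    show "card (linP q U) > 0" using card_linP[OF q, of U] U by simp
  qed (use inner in auto)
qed



lemma variance_core:
  fixes a :: "int \<Rightarrow> real" and \<delta> \<nu> \<eta> :: real and N T :: nat
  assumes d: "0 < \<delta>" "\<delta> \<le> 1" and nu: "0 < \<nu>"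
    and lo: "\<forall>n\<in>{1..int N}. - \<delta> \<le> a n" and hi: "\<forall>n\<in>{1..int N}. a n \<le> 1"
    and good: "\<forall>n\<in>{1..int N}. n + int T \<le> int N \<longrightarrow> a n \<le> \<nu> * \<delta> / 2"
    and mean: "\<bar>\<Sum>n\<in>{1..int N}. a n\<bar> \<le> \<eta>"
    and sq: "\<nu> * \<delta>^2 * real N \<le> (\<Sum>n\<in>{1..int N}. (a n)^2)"
    and h1: "\<eta> + real T \<le> \<delta> * real N / 2"
    and h2: "\<eta> + 2 * real T < \<nu> * \<delta>^2 * real N / 4"
  shows False
proof -
  define G where "G = {n\<in>{1..int N}. n + int T \<le> int N}"
  define B where "B = {n\<in>{1..int N}. \<not> (n + int T \<le> int N)}"
  define \<kappa> where "\<kappa> = \<nu> * \<delta> / 2 - \<delta>"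
  have fG: "finite G" unfolding G_def by (rule finite_subset[of _ "{1..int N}"]) auto
  have fB: "finite B" unfolding B_def by (rule finite_subset[of _ "{1..int N}"]) auto
  have un: "{1..int N} = G \<union> B" and dis: "G \<inter> B = {}" unfolding G_def B_def by auto
  have sumsplit: "\<And>g::int\<Rightarrow>real. sum g {1..int N} = sum g G + sum g B"
    unfolding un using fG fB dis by (simp add: sum.union_disjoint)
  have cB: "card B \<le> T"
  proof -
    have "B \<subseteq> {int N - int T + 1..int N}" unfolding B_def by auto
    then have "card B \<le> card {int N - int T + 1..int N}" by (intro card_mono) auto
    then show ?thesis by simp
  qed
  have cG: "card G \<le> N"
  proof -
    have "card G \<le> card {1..int N}" unfolding G_def by (intro card_mono) auto
    then show ?thesis by simp
  qed
  have pt: "(a n)^2 \<le> \<kappa> * a n + \<nu> * \<delta>^2 / 2" if "n \<in> G" for n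
  proof -
    have "- \<delta> \<le> a n" "a n \<le> \<nu> * \<delta> / 2" using that lo good unfolding G_def by auto
    then have "0 \<le> (a n + \<delta>) * (\<nu> * \<delta> / 2 - a n)" by simp
    then show ?thesis unfolding \<kappa>_def by (simp add: algebra_simps power2_eq_square)
  qed
  have "(\<Sum>n\<in>G. (a n)^2) \<le> (\<Sum>n\<in>G. \<kappa> * a n + \<nu> * \<delta>^2 / 2)" using pt by (intro sum_mono) auto
  also have "\<dots> = \<kappa> * (\<Sum>n\<in>G. a n) + real (card G) * (\<nu> * \<delta>^2 / 2)"
    by (simp add: sum.distrib sum_distrib_left)
  also have "real (card G) * (\<nu> * \<delta>^2 / 2) \<le> real N * (\<nu> * \<delta>^2 / 2)"
    using cG nu d by (intro mult_right_mono) auto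
  finally have SG: "(\<Sum>n\<in>G. (a n)^2) \<le> \<kappa> * (\<Sum>n\<in>G. a n) + real N * (\<nu> * \<delta>^2 / 2)" by simp
  have Bsq: "(\<Sum>n\<in>B. (a n)^2) \<le> real T"
  proof -
    have "\<forall>n\<in>B. \<bar>(a n)^2\<bar> \<le> 1"
    proof
      fix n assume "n \<in> B"
      then have "-1 \<le> a n" "a n \<le> 1" using lo hi d unfolding B_def by force+
      then show "\<bar>(a n)^2\<bar> \<le> 1" by (simp add: abs_square_le_1)
    qed
    then have "\<bar>\<Sum>n\<in>B. (a n)^2\<bar> \<le> real (card B) * 1" by (rule abs_sum_le[OF fB])
    then show ?thesis using cB by linarith
  qed
  have Ba: "\<bar>\<Sum>n\<in>B. a n\<bar> \<le> real T"
  proof -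
    have "\<forall>n\<in>B. \<bar>a n\<bar> \<le> 1"
    proof
      fix n assume "n \<in> B"
      then have "-1 \<le> a n" "a n \<le> 1" using lo hi d unfolding B_def by force+
      then show "\<bar>a n\<bar> \<le> 1" by simp
    qed
    then have "\<bar>\<Sum>n\<in>B. a n\<bar> \<le> real (card B) * 1" by (rule abs_sum_le[OF fB])
    then show ?thesis using cB by linarith
  qed
  have Ga: "\<bar>\<Sum>n\<in>G. a n\<bar> \<le> \<eta> + real T"
    using sumsplit[of a] mean Ba by linarith
  have nd: "0 \<le> \<nu> * \<delta>" using d nu by simp
  have kap: "\<bar>\<kappa>\<bar> \<le> \<nu> * \<delta> / 2 + \<delta>" unfolding \<kappa>_def abs_le_iff using d nd by linarith
  have "\<kappa> * (\<Sum>n\<in>G. a n) \<le> \<bar>\<kappa>\<bar> * \<bar>\<Sum>n\<in>G. a n\<bar>" by (metis abs_ge_self abs_mult)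
  also have "\<dots> \<le> (\<nu> * \<delta> / 2 + \<delta>) * (\<eta> + real T)"
    by (intro mult_mono kap Ga) (use nd d in auto)
  also have "\<dots> = (\<nu> * \<delta> / 2) * (\<eta> + real T) + \<delta> * (\<eta> + real T)" by (simp add: algebra_simps)
  also have "(\<nu> * \<delta> / 2) * (\<eta> + real T) \<le> (\<nu> * \<delta> / 2) * (\<delta> * real N / 2)"
    using h1 nu d by (intro mult_left_mono) auto
  also have "\<delta> * (\<eta> + real T) \<le> 1 * (\<eta> + real T)"
  proof (rule mult_right_mono)
    show "\<delta> \<le> 1" by (rule d(2))
    have "0 \<le> \<bar>\<Sum>n\<in>G. a n\<bar>" by simp
    then show "0 \<le> \<eta> + real T" using Ga by linarith
  qed
  finally have K: "\<kappa> * (\<Sum>n\<in>G. a n) \<le> \<nu> * \<delta>^2 * real N / 4 + (\<eta> + real T)"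
    by (simp add: power2_eq_square algebra_simps)
  have "(\<Sum>n\<in>{1..int N}. (a n)^2) \<le> \<nu> * \<delta>^2 * real N / 4 + (\<eta> + real T) + real N * (\<nu> * \<delta>^2 / 2) + real T"
    using sumsplit[of "\<lambda>n. (a n)^2"] SG Bsq K by linarith
  then show False using sq h2 by (simp add: algebra_simps)
qed



lemma numerics:
  fixes Nr Ur Vr qr X cs R :: real
  assumes cs: "0 < cs" "cs \<le> 1/8" and R: "R \<ge> 1" and X: "X \<ge> 2"
    and NX: "Nr \<ge> X powr (16 / cs * R^3)"
    and U1: "Ur \<ge> 1" and Ul: "Nr powr (cs / R^2) \<le> Ur" and Uu: "Ur \<le> 2 * Nr powr (cs / R^2)"
    and Vl: "Ur powr (cs / R) \<le> Vr" and Vu: "Vr \<le> 2 * Ur powr (cs / R)"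
    and q: "qr \<le> Nr powr (1/4)" and q0: "qr \<ge> 0"
  shows "Nr \<ge> 1" "Nr powr (1/2) \<ge> 128 * X" "Ur powr (1/2) \<ge> 128 * X"
    "qr * Ur * Vr \<le> 8 * Nr powr (1/2)" "Ur powr (1/4) * Vr \<le> 2 * Ur powr (1/2)"
    "Vr \<ge> Nr powr (cs^2 / R^3)"
proof -
  have X1: "X \<ge> 1" using X by simp
  have R2: "R^2 \<ge> 1" using R by (simp add: one_le_power)
  have R3: "R^3 \<ge> 1" using R by (simp add: one_le_power)
  have e0: "16 / cs * R^3 \<ge> 0" using cs R by (intro mult_nonneg_nonneg) auto
  show N1: "Nr \<ge> 1" using NX ge_one_powr_ge_zero[OF X1 e0] by linarith
  have c8: "cs / R^2 \<le> 1/8"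
  proof -
    have "cs / R^2 \<le> cs / 1" using cs R2 by (intro divide_left_mono) auto
    then show ?thesis using cs by linarith
  qed
  have cR: "cs / R \<le> 1/8"
  proof -
    have "cs / R \<le> cs / 1" using cs R by (intro divide_left_mono) auto
    then show ?thesis using cs by linarith
  qed
  define p where "p = cs / (2 * R^2)"
  have p0: "p \<ge> 0" unfolding p_def using cs R2 by simp
  have "X^8 = X powr 8" using X by simp
  also have "X powr 8 \<le> X powr (8 * R)" using R X1 by (intro powr_mono) auto
  also have "X powr (8 * R) = (X powr (16 / cs * R^3)) powr p"
    unfolding powr_powr p_def using cs R2 by (simp add: power2_eq_square power3_eq_cube field_simps)
  also have "(X powr (16 / cs * R^3)) powr p \<le> Nr powr p"
    using NX p0 by (intro powr_mono2) auto
  finally have Y: "X^8 \<le> Nr powr p" .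
  have "X^8 = X * X^7" by (simp add: eval_nat_numeral)
  moreover have "X^7 \<ge> 2^7" using X by (intro power_mono) auto
  ultimately have X8: "X^8 \<ge> 128 * X" using X by simp
  define w where "w = cs / R^2"
  have "p = w / 2" unfolding p_def w_def by simp
  moreover have "w \<le> 1/8" using c8 unfolding w_def .
  ultimately have "p \<le> 1/2" by linarith
  then have "Nr powr (1/2) \<ge> Nr powr p" using N1 by (intro powr_mono) auto
  then show "Nr powr (1/2) \<ge> 128 * X" using Y X8 by linarith
  have "Nr powr p = (Nr powr (cs / R^2)) powr (1/2)" unfolding powr_powr p_def by (simp add: mult.commute)
  also have "\<dots> \<le> Ur powr (1/2)"
    using Ul by (intro powr_mono2) auto
  finally show "Ur powr (1/2) \<ge> 128 * X" using Y X8 by linarith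
  have Nq: "Nr powr (cs / R^2) \<le> Nr powr (1/8)" using N1 c8 by (intro powr_mono) auto
  have UcR: "Ur powr (cs / R) \<le> Ur powr (1/8)" using U1 cR by (intro powr_mono) auto
  have U8: "Ur powr (1/8) \<le> Ur" using U1 powr_mono[of "1/8" 1 Ur] by simp
  have Ub: "Ur \<le> 2 * Nr powr (1/8)" using Uu Nq by linarith
  have Vb: "Vr \<le> 4 * Nr powr (1/8)" using Vu UcR U8 Ub by linarith
  have "qr * Ur * Vr \<le> Nr powr (1/4) * (2 * Nr powr (1/8)) * (4 * Nr powr (1/8))"
    using q q0 Ub Vb U1 Vl by (intro mult_mono) (auto intro: order_trans[OF _ Vl])
  also have "\<dots> = 8 * (Nr powr (1/4) * Nr powr (1/8) * Nr powr (1/8))" by simp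
  also have "Nr powr (1/4) * Nr powr (1/8) * Nr powr (1/8) = Nr powr (1/2)"
    by (simp add: powr_add[symmetric])
  finally show "qr * Ur * Vr \<le> 8 * Nr powr (1/2)" by simp
  have "Ur powr (1/4) * Vr \<le> Ur powr (1/4) * (2 * Ur powr (1/8))"
    using Vu UcR by (intro mult_left_mono) auto
  also have "\<dots> = 2 * (Ur powr (1/4) * Ur powr (1/8))" by simp
  also have "Ur powr (1/4) * Ur powr (1/8) \<le> Ur powr (1/2)"
    unfolding powr_add[symmetric] using U1 by (intro powr_mono) auto
  finally show "Ur powr (1/4) * Vr \<le> 2 * Ur powr (1/2)" by simp
  have "Nr powr (cs^2 / R^3) = (Nr powr (cs / R^2)) powr (cs / R)"
    unfolding powr_powr by (simp add: power2_eq_square power3_eq_cube)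
  also have "\<dots> \<le> Ur powr (cs / R)" using Ul cs R by (intro powr_mono2) auto
  finally show "Vr \<ge> Nr powr (cs^2 / R^3)" using Vl by linarith
qed



lemma smoothing_lo:
  assumes q: "q \<ge> 1" and r: "\<forall>n. r n \<ge> 1" and U: "U \<ge> 1" and V: "V \<ge> 1"
    and h: "\<forall>x. b \<le> h x"
  shows "b \<le> smoothing q U V r h n"
  unfolding smoothing_def
proof (rule avg_ge)
  show "finite (linP q U)" unfolding linP_def by simp
  show "card (linP q U) > 0" using card_linP[OF q, of U] U by simp
  show "\<forall>m\<in>linP q U. b \<le> 1 / real (card (linQ q V r (n - m))) * (\<Sum>k\<in>linQ q V r (n - m). h (n + k))"
  proof
    fix m
    show "b \<le> 1 / real (card (linQ q V r (n - m))) * (\<Sum>k\<in>linQ q V r (n - m). h (n + k))"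
    proof (rule avg_ge)
      show "finite (linQ q V r (n - m))" unfolding linQ_def by simp
      show "card (linQ q V r (n - m)) > 0" using card_linQ[of q r "n - m" V] q r V by simp
    qed (use h in auto)
  qed
qed

lemma final_arith:
  fixes N T s u e \<eta> :: real
  assumes e: "0 < e" "e \<le> 1" and s: "s \<ge> 128 * (2 / e)" and u: "u \<ge> 128 * (2 / e)"
    and T: "T \<le> 8 * s" "0 \<le> T" and ss: "s * s = N"
    and eta: "\<eta> \<le> T + (N + 2 * T) * (4 / u)"
  shows "\<eta> + 2 * T < N * e / 4"
proof -
  have k: "128 * (2 / e) * e = 256" using e by simp
  have se: "s * e \<ge> 256" using mult_right_mono[OF s, of e] e k by linarith
  have ue: "u * e \<ge> 256" using mult_right_mono[OF u, of e] e k by linarith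
  have p0: "128 * (2 / e) > 0" using e by simp
  have sp: "s > 0" using s p0 by linarith
  have u0: "u > 0" using u p0 by linarith
  have "s * e \<le> s * 1" using e sp by (intro mult_left_mono) auto
  then have s0: "s \<ge> 256" using se by linarith
  have N0: "N > 0" using ss sp by (metis mult_pos_pos)
  have "8 * s \<le> s * s" using s0 sp by (intro mult_right_mono) auto
  then have TN: "T \<le> N" using T ss by linarith
  have "\<eta> + 2 * T \<le> 3 * T + (N + 2 * T) * (4 / u)" using eta by simp
  also have "(N + 2 * T) * (4 / u) \<le> (3 * N) * (4 / u)"
    using TN u0 by (intro mult_right_mono) auto
  also have "3 * T \<le> 24 * s" using T by simp
  finally have A: "\<eta> + 2 * T \<le> 24 * s + 12 * N / u" by simp
  have B: "24 * s \<le> 24 * N * e / 256"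
  proof -
    have "24 * s * 256 \<le> 24 * s * (s * e)" using se s0 by (intro mult_left_mono) auto
    also have "\<dots> = 24 * N * e" using ss by (simp add: algebra_simps)
    finally show ?thesis by simp
  qed
  have C: "12 * N / u \<le> 12 * N * e / 256"
  proof -
    have "12 * N * 256 \<le> 12 * N * (u * e)" using ue N0 by (intro mult_left_mono) auto
    then show ?thesis using u0 by (simp add: field_simps)
  qed
  have "24 * N * e / 256 + 12 * N * e / 256 < N * e / 4" using N0 e by simp
  then show ?thesis using A B C by linarith
qed



theorem proposition9p6:
  fixes lams :: "int list" and cs :: real
  assumes "\<forall>l\<in>set lams. l \<noteq> 0"
    and "0 < cs" and "cs \<le> 1/8"
  shows "\<exists>C c c'. C > 0 \<and> c > 0 \<and> c' > 0 \<and>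
    (\<forall>(\<epsilon>::real) (\<delta>::real) (\<nu>::real) (R::nat) (N::nat) (M::nat) (x::nat \<Rightarrow> int) (y::nat \<Rightarrow> int)
       (q::nat) (U::nat) (V::nat) (r::int \<Rightarrow> nat) (A::int set).
      0 < \<epsilon> \<longrightarrow> \<epsilon> \<le> 1 \<longrightarrow> 0 < \<delta> \<longrightarrow> \<delta> \<le> 1 \<longrightarrow> \<nu> > 0 \<longrightarrow> R \<ge> 1 \<longrightarrow>
      prime M \<longrightarrow>
      real (2 * nat (sum_list (map abs lams)) * N) \<le> real M \<longrightarrow>
      real M \<le> 2 * real (2 * nat (sum_list (map abs lams)) * N) \<longrightarrow>
      (\<forall>i\<in>{1..R}. 0 \<le> x i \<and> x i < int M \<and> 0 \<le> y i \<and> y i < int M ^ 2) \<longrightarrow>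
      real N \<ge> (2 / (\<epsilon> * \<delta>)) powr (C * real R ^ 3) \<longrightarrow>
      lin_system cs N \<epsilon> \<delta> M R x y q U V r \<longrightarrow>
      A \<subseteq> {1..int N} \<longrightarrow> \<delta> = real (card A) / real N \<longrightarrow>
      L2N_sq N (\<lambda>n. smoothing q U V r (balanced_fn A \<delta> N) n / \<delta>) \<ge> \<nu> \<longrightarrow>
      \<epsilon> \<le> c * \<nu> * \<delta> \<longrightarrow>
      (\<exists>Q. is_AP Q \<and> Q \<subseteq> {1..int N} \<and>
         real (card (A \<inter> Q)) / real (card Q) \<ge> (1 + \<nu> / 2) * \<delta> \<and>
         real (card Q) \<ge> real N powr (c' / real R ^ 3)))"
proof -
  have cs: "0 < cs" "cs \<le> 1/8" using assms by auto
  show ?thesis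
    apply (rule exI[of _ "16 / cs"], rule exI[of _ "1::real"], rule exI[of _ "cs^2"])
    apply (intro conjI allI impI)
       apply (use cs in simp)
      apply simp
     apply (use cs in simp)
    subgoal premises p for \<epsilon> \<delta> \<nu> R N M x y q U V r A
    proof (rule ccontr)
      assume noQ: "\<not> (\<exists>Q. is_AP Q \<and> Q \<subseteq> {1..int N} \<and>
         real (card (A \<inter> Q)) / real (card Q) \<ge> (1 + \<nu> / 2) * \<delta> \<and>
         real (card Q) \<ge> real N powr (cs^2 / real R ^ 3))"
      have eps: "0 < \<epsilon>" "\<epsilon> \<le> 1" and del: "0 < \<delta>" "\<delta> \<le> 1" and nu: "\<nu> > 0" and R1: "R \<ge> 1"
        using p by auto
      have NX: "real N \<ge> (2 / (\<epsilon> * \<delta>)) powr (16 / cs * real R ^ 3)" using p(11) .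
      have lin: "lin_system cs N \<epsilon> \<delta> M R x y q U V r" using p(12) .
      have A: "A \<subseteq> {1..int N}" using p(13) .
      have dA: "\<delta> = real (card A) / real N" using p(14) .
      have L2: "L2N_sq N (\<lambda>n. smoothing q U V r (balanced_fn A \<delta> N) n / \<delta>) \<ge> \<nu>" using p(15) .
      have enu: "\<epsilon> \<le> \<nu> * \<delta>" using p(16) by simp
      have q1: "q \<ge> 1" and U1: "U \<ge> 1" and V1: "V \<ge> 1" and r1: "\<forall>n. r n \<ge> 1"
        and Ul: "real N powr (cs / real R ^ 2) \<le> real U" and Uu: "real U \<le> 2 * real N powr (cs / real R ^ 2)"
        and Vl: "real U powr (cs / real R) \<le> real V" and Vu: "real V \<le> 2 * real U powr (cs / real R)"
        and qN: "real q \<le> real N powr (1/4)" and rU: "\<forall>n. real (r n) \<le> real U powr (1/4)"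
        using lin unfolding lin_system_def by auto
      define e where "e = \<epsilon> * \<delta>"
      define X where "X = 2 / e"
      have e0: "0 < e" "e \<le> 1" unfolding e_def using eps del by (auto intro: mult_le_one)
      have X2: "X \<ge> 2" unfolding X_def using e0 by (simp add: field_simps)
      have R1r: "real R \<ge> 1" using R1 by simp
      have NX': "real N \<ge> X powr (16 / cs * real R ^ 3)" using NX unfolding X_def e_def .
      have U1r: "real U \<ge> 1" using U1 by simp
      have q0r: "real q \<ge> 0" by simp
      note nums = numerics[OF cs R1r X2 NX' U1r Ul Uu Vl Vu qN q0r]
      from nums have N1: "real N \<ge> 1" and sN: "real N powr (1/2) \<ge> 128 * X"
        and sU: "real U powr (1/2) \<ge> 128 * X" and qUV: "real q * real U * real V \<le> 8 * real N powr (1/2)"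
        and RV: "real U powr (1/4) * real V \<le> 2 * real U powr (1/2)"
        and VN: "real V \<ge> real N powr (cs^2 / real R ^ 3)"
        by auto
      define T where "T = q * U * V"
      have "real U powr (1/4) \<le> real U" using U1r powr_mono[of "1/4" 1 "real U"] by simp
      then have rU': "\<forall>n. r n \<le> U" using rU by (metis of_nat_le_iff order_trans)
      have Tb: "\<forall>n. q * r n * V \<le> T" unfolding T_def using rU' by (auto intro: mult_le_mono)
      have qUT: "q * U \<le> T" using V1 unfolding T_def by simp
      have N0: "N \<ge> 1" using N1 by simp
      define f where "f = balanced_fn A \<delta> N"
      have f1: "\<forall>x. \<bar>f x\<bar> \<le> 1" unfolding f_def balanced_fn_def using del by auto
      have f0: "\<forall>x. x \<notin> {1..int N} \<longrightarrow> f x = 0" using A unfolding f_def balanced_fn_def by auto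
      have flo: "\<forall>x. - \<delta> \<le> f x" unfolding f_def balanced_fn_def using del by auto
      have fs: "sum f {1..int N} = 0"
      proof -
        have "sum f {1..int N} = (\<Sum>n\<in>{1..int N}. (if n \<in> A then 1 else 0) - \<delta>)"
          unfolding f_def balanced_fn_def by (rule sum.cong) auto
        also have "\<dots> = (\<Sum>n\<in>{1..int N}. (if n \<in> A then 1 else 0)) - (\<Sum>n\<in>{1..int N}. \<delta>)"
          by (rule sum_subtractf)
        also have "(\<Sum>n\<in>{1..int N}. (if n \<in> A then 1 else 0::real)) = sum (\<lambda>_. 1) ({1..int N} \<inter> A)"
          using sum.inter_restrict[of "{1..int N}" "\<lambda>_. 1::real" A] by simp
        also have "{1..int N} \<inter> A = A" using A by auto
        also have "(\<Sum>n\<in>{1..int N}. \<delta>) = \<delta> * real N" by simp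
        also have "\<delta> * real N = real (card A)" using dA N0 by simp
        finally show ?thesis by simp
      qed
      define a where "a = (\<lambda>n. smoothing q U V r f n)"
      define \<eta> where "\<eta> = real T + real (N + T + q*U) * (2 * real U powr (1/4) * real V / real U)"
      have mean: "\<bar>\<Sum>n\<in>{1..int N}. a n\<bar> \<le> \<eta>"
        unfolding a_def \<eta>_def by (rule mean_bound[OF f1 f0 fs q1 U1 V1 r1 rU Tb])
      have noAP: "\<forall>Q. is_AP Q \<longrightarrow> Q \<subseteq> {1..int N} \<longrightarrow> card Q = V \<longrightarrow>
                  real (card (A \<inter> Q)) / real (card Q) < (1 + \<nu>/2) * \<delta>"
      proof (intro allI impI)
        fix Q assume Q: "is_AP Q" "Q \<subseteq> {1..int N}" "card Q = V"
        then have "real (card Q) \<ge> real N powr (cs^2 / real R ^ 3)" using VN by simp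
        then show "real (card (A \<inter> Q)) / real (card Q) < (1 + \<nu>/2) * \<delta>"
          using noQ Q by (meson not_le)
      qed
      have good: "\<forall>n\<in>{1..int N}. n + int T \<le> int N \<longrightarrow> a n \<le> \<nu> * \<delta> / 2"
        unfolding a_def f_def using ap_bound[OF q1 V1 U1 r1 Tb A _ _ noAP] by auto
      have lo: "\<forall>n\<in>{1..int N}. - \<delta> \<le> a n"
        unfolding a_def using smoothing_lo[OF q1 r1 U1 V1 flo] by auto
      have hi: "\<forall>n\<in>{1..int N}. a n \<le> 1"
        unfolding a_def using smoothing_abs[OF q1 r1 U1 V1 f1] abs_le_D1 by blast
      have sq: "\<nu> * \<delta>^2 * real N \<le> (\<Sum>n\<in>{1..int N}. (a n)^2)"
      proof -
        have "L2N_sq N (\<lambda>n. a n / \<delta>) = (\<Sum>n\<in>{1..int N}. (a n)^2) / (\<delta>^2 * real N)"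
          unfolding L2N_sq_def by (simp add: power_divide sum_divide_distrib[symmetric])
        moreover have "\<nu> \<le> L2N_sq N (\<lambda>n. a n / \<delta>)" using L2 unfolding a_def f_def .
        moreover have "\<delta>^2 * real N > 0" using del N0 by simp
        ultimately show ?thesis by (simp add: le_divide_eq)
      qed
      define sN where "sN = real N powr (1/2)"
      define sU where "sU = real U powr (1/2)"
      have ssN: "sN * sN = real N" unfolding sN_def using N1
        by (simp add: powr_add[symmetric])
      have ssU: "sU * sU = real U" unfolding sU_def using U1r
        by (simp add: powr_add[symmetric])
      have sU0: "sU > 0" unfolding sU_def using U1r by simp
      have etab: "\<eta> \<le> real T + (real N + 2 * real T) * (4 / sU)"
      proof -
        have "real (q * U) \<le> real T" using qUT by (simp only: of_nat_le_iff)
        then have "real (N + T + q*U) \<le> real N + 2 * real T" by simp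
        moreover have "2 * real U powr (1/4) * real V / real U \<le> 4 / sU"
        proof -
          have "2 * real U powr (1/4) * real V \<le> 2 * (2 * sU)" using RV unfolding sU_def by (simp add: mult.commute)
          then have "2 * real U powr (1/4) * real V / real U \<le> 4 * sU / (sU * sU)"
            unfolding ssU using U1r by (simp add: divide_right_mono)
          also have "\<dots> = 4 / sU" using sU0 by simp
          finally show ?thesis .
        qed
        moreover have "0 \<le> 2 * real U powr (1/4) * real V / real U" by simp
        ultimately show ?thesis unfolding \<eta>_def
          by (smt (verit) mult_mono of_nat_0_le_iff)
      qed
      have Tr: "real T \<le> 8 * sN" unfolding T_def sN_def using qUV by simp
      have fa: "\<eta> + 2 * real T < real N * e / 4"
        by (rule final_arith[OF e0 _ _ Tr _ ssN etab]) (use sN sU in \<open>auto simp: sN_def sU_def X_def\<close>)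
      have eD: "e \<le> \<delta>" unfolding e_def using eps del by (simp add: mult_le_cancel_right1)
      have eN: "e \<le> \<nu> * \<delta>^2" unfolding e_def using enu del by (simp add: power2_eq_square mult_right_mono)
      have "real N * e / 4 \<le> \<delta> * real N / 4" using eD N1 by (simp add: mult_left_mono)
      moreover have "0 \<le> \<delta> * real N" using del by simp
      moreover have "0 \<le> real T" by simp
      ultimately have h1: "\<eta> + real T \<le> \<delta> * real N / 2" using fa by linarith
      have "real N * e / 4 \<le> \<nu> * \<delta>^2 * real N / 4" using eN N1 by (simp add: mult_left_mono mult.commute)
      then have h2: "\<eta> + 2 * real T < \<nu> * \<delta>^2 * real N / 4" using fa by linarith
      show False by (rule variance_core[OF del nu lo hi good mean sq h1 h2])
    qed
    done
qed


end
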